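(* For every $n\ge1$, the map $\pi:\widehat{\mathcal{T}}_n\to\widehat{\mathcal{T}}_n$ is a bijection.
   Context: A plane binary tree is a finite rooted tree in which every vertex is either an endpoint (a leaf, with no children) or has exactly two children, an ordered left child and right child. Every non-root vertex is thus either a left descendent or a right descendent of its parent. The endpoints are ordered from left to right in the planar order. $\mathcal{T}_n$ denotes the set of plane binary trees with exactly $n+2$ endpoints. A last branching vertex of a plane binary tree is a non-endpoint vertex both of whose children are endpoints. For $n\ge1$ the root is never a last branching vertex. A marked tree is a pair $(T,v)$ with $T\in\mathcal{T}_n$ and $v$ a last branching vertex of $T$. The set of marked trees is $\widehat{\mathcal{T}}_n$. Definition of $\pi$. Let $(T,v)\in\widehat{\mathcal{T}}_n$, and let $a$ and $b$ be the left and right children of $v$ (both endpoints). Case 1: $v$ is a right child. - Delete the endpoint $a$ together with the edge $va$. The vertex $v$ and its remaining child $b$ are merged into a single endpoint, sitting at $v$'s position; this endpoint is a right child. The result is a tree with $n+1$ endpoints. - If $b$ was not the rightmost endpoint of $T$: let $L$ be the first endpoint to the right of this new endpoint that is a right child. Replace $L$ by a new internal vertex $w$ (still a right child, in $L$'s place) with two new endpoint children. - If $b$ was the rightmost endpoint of $T$: let $L$ be the rightmost endpoint of the reduced tree that is a left child. Replace $L$ by a new internal vertex $w$ (a left child, in $L$'s place) with two new endpoint children. - In either sub-case, $\pi(T,v)=(T',w)$, where $T'$ is the resulting tree and the mark is on $w$. Case 2: $v$ is a left child. Apply the mirror image of Case 1, exchanging left and right everywhere. - Delete $b$ and the edge $vb$,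 merging $v$ and $a$ into a single endpoint, which is a left child. - If $a$ was not the leftmost endpoint of $T$, graft a cherry (an internal vertex $w$ with two new endpoint children) onto the first left-child endpoint to its left. - Otherwise, graft the cherry onto the leftmost endpoint that is a right child. - Mark the new vertex $w$. *)

theory Defs
  imports Main
begin

text \<open>Vertices are addressed by their path from the root:
  a list of directions, False = go to the left child, True = go to the right child.\<close>

datatype ptree = Leaf | Node ptree ptree

fun leaves :: "ptree \<Rightarrow> bool list list" where
  "leaves Leaf = [[]]"
| "leaves (Node l r) = map (Cons False) (leaves l) @ map (Cons True) (leaves r)"

fun subtree_at :: "ptree \<Rightarrow> bool list \<Rightarrow> ptree option" where
  "subtree_at t [] = Some t"
| "subtree_at Leaf (_ # _) = None"
| "subtree_at (Node l r) (b # p) = subtree_at (if b then r else l) p"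

fun replace_at :: "ptree \<Rightarrow> bool list \<Rightarrow> ptree \<Rightarrow> ptree" where
  "replace_at t [] s = s"
| "replace_at Leaf (_ # _) s = Leaf"
| "replace_at (Node l r) (b # p) s =
     (if b then Node l (replace_at r p s) else Node (replace_at l p s) r)"

definition is_right_child :: "bool list \<Rightarrow> bool" where
  "is_right_child u \<longleftrightarrow> u \<noteq> [] \<and> last u"

definition is_left_child :: "bool list \<Rightarrow> bool" where
  "is_left_child u \<longleftrightarrow> u \<noteq> [] \<and> \<not> last u"

definition trees :: "nat \<Rightarrow> ptree set" where
  "trees n = {T. length (leaves T) = n + 2}"

definition last_branching :: "ptree \<Rightarrow> bool list \<Rightarrow> bool" where
  "last_branching T v \<longleftrightarrow> subtree_at T v = Some (Node Leaf Leaf)"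

definition marked :: "nat \<Rightarrow> (ptree \<times> bool list) set" where
  "marked n = {(T, v). T \<in> trees n \<and> last_branching T v}"

text \<open>After deleting a child of v, v becomes an endpoint of the
  reduced tree T0 (at the same address).\<close>
definition pi_map :: "ptree \<times> bool list \<Rightarrow> ptree \<times> bool list" where
  "pi_map Tv = (case Tv of (T, v) \<Rightarrow>
     (let T0 = replace_at T v Leaf;
          ls = leaves T0;
          before = takeWhile (\<lambda>u. u \<noteq> v) ls;
          after = tl (dropWhile (\<lambda>u. u \<noteq> v) ls);
          L = (if is_right_child v then
                 (if after \<noteq> [] then hd (filter is_right_child after)
                  else last (filter is_left_child ls))
               else
                 (if before \<noteq> [] then last (filter is_left_child before)
                  else hd (filter is_right_child ls)))
      in (replace_at T0 L (Node Leaf Leaf), L)))"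

end

theory Submission
  imports Defs
begin

lemma leaves_ne: "leaves T \<noteq> []"
  by (induct T) auto

lemma leaves_split:
  "subtree_at T p = Some s \<Longrightarrow> \<exists>pre post. leaves T = pre @ map (\<lambda>x. p @ x) (leaves s) @ post
     \<and> (\<forall>s'. leaves (replace_at T p s') = pre @ map (\<lambda>x. p @ x) (leaves s') @ post)"
proof (induct p arbitrary: T)
  case Nil
  then show ?case by (intro exI[of _ "[]"]) auto
next
  case (Cons b p)
  then obtain l r where T: "T = Node l r" by (cases T) auto
  show ?case
  proof (cases b)
    case True
    with Cons T have "subtree_at r p = Some s" by simp
    with Cons.hyps obtain pre post where
      h: "leaves r = pre @ map (\<lambda>x. p @ x) (leaves s) @ post"
         "\<forall>s'. leaves (replace_at r p s') = pre @ map (\<lambda>x. p @ x) (leaves s') @ post"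
      by blast
    show ?thesis
      apply (rule exI[of _ "map (Cons False) (leaves l) @ map (Cons True) pre"])
      apply (rule exI[of _ "map (Cons True) post"])
      using h T True by (simp add: comp_def)
  next
    case False
    with Cons T have "subtree_at l p = Some s" by simp
    with Cons.hyps obtain pre post where
      h: "leaves l = pre @ map (\<lambda>x. p @ x) (leaves s) @ post"
         "\<forall>s'. leaves (replace_at l p s') = pre @ map (\<lambda>x. p @ x) (leaves s') @ post"
      by blast
    show ?thesis
      apply (rule exI[of _ "map (Cons False) pre"])
      apply (rule exI[of _ "map (Cons False) post @ map (Cons True) (leaves r)"])
      using h T False by (simp add: comp_def)
  qed
qed

lemma subtree_replace: "subtree_at T p \<noteq> None \<Longrightarrow> subtree_at (replace_at T p s) p = Some s"
  by (induct T p s rule: replace_at.induct) auto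

lemma replace_replace: "subtree_at T p \<noteq> None \<Longrightarrow> replace_at (replace_at T p s) p s' = replace_at T p s'"
  by (induct T p s rule: replace_at.induct) auto

lemma replace_same: "subtree_at T p = Some s \<Longrightarrow> replace_at T p s = T"
  by (induct T p s rule: replace_at.induct) auto

lemma leaves_distinct: "distinct (leaves T)"
  by (induct T) (auto simp: distinct_map)

lemma leaves_leaf: "u \<in> set (leaves T) \<Longrightarrow> subtree_at T u = Some Leaf"
  by (induct T arbitrary: u) auto

lemma leaves_props: "T \<noteq> Leaf \<Longrightarrow> is_left_child (hd (leaves T)) \<and> is_right_child (last (leaves T))
   \<and> (\<forall>u\<in>set (leaves T). u \<noteq> [])"
proof (induct T)
  case Leaf
  then show ?case by simp
next
  case (Node l r)
  have a: "is_left_child (hd (leaves (Node l r)))"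
  proof (cases "l = Leaf")
    case True then show ?thesis by (simp add: is_left_child_def)
  next
    case False
    with Node have "is_left_child (hd (leaves l))" "\<forall>u\<in>set (leaves l). u \<noteq> []" by auto
    moreover have "hd (leaves l) \<in> set (leaves l)" using leaves_ne by (simp add: hd_in_set)
    ultimately show ?thesis using leaves_ne[of l]
      by (auto simp: is_left_child_def hd_map)
  qed
  have b: "is_right_child (last (leaves (Node l r)))"
  proof (cases "r = Leaf")
    case True then show ?thesis by (simp add: is_right_child_def)
  next
    case False
    with Node have "is_right_child (last (leaves r))" "\<forall>u\<in>set (leaves r). u \<noteq> []" by auto
    moreover have "last (leaves r) \<in> set (leaves r)" using leaves_ne by simp
    ultimately show ?thesis using leaves_ne[of r]
      by (auto simp: is_right_child_def last_map)
  qed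
  show ?case using a b by auto
qed

definition Lsel :: "bool list list \<Rightarrow> bool list \<Rightarrow> bool list" where
  "Lsel ls v = (let before = takeWhile (\<lambda>u. u \<noteq> v) ls;
          after = tl (dropWhile (\<lambda>u. u \<noteq> v) ls)
      in (if is_right_child v then
                 (if after \<noteq> [] then hd (filter is_right_child after)
                  else last (filter is_left_child ls))
               else
                 (if before \<noteq> [] then last (filter is_left_child before)
                  else hd (filter is_right_child ls))))"

definition Vsel :: "bool list list \<Rightarrow> bool list \<Rightarrow> bool list" where
  "Vsel ls L = (let before = takeWhile (\<lambda>u. u \<noteq> L) ls;
          after = tl (dropWhile (\<lambda>u. u \<noteq> L) ls)
      in (if is_right_child L then
            (if filter is_right_child before \<noteq> [] then last (filter is_right_child before) else hd ls)
          else
            (if filter is_left_child after \<noteq> [] then hd (filter is_left_child after) else last ls)))"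

lemma tw_split: "x \<notin> set xs \<Longrightarrow> takeWhile (\<lambda>u. u\<noteq>x) (xs @ x # ys) = xs \<and> tl (dropWhile (\<lambda>u. u\<noteq>x) (xs @ x # ys)) = ys"
  by (induct xs) auto

lemma LR: "is_left_child u \<Longrightarrow> \<not> is_right_child u"
  by (simp add: is_left_child_def is_right_child_def)

lemma list_core:
  assumes d: "distinct ls" and sp: "ls = pre @ v # post"
    and hl: "is_left_child (hd ls)" and lr: "is_right_child (last ls)"
    and ne: "\<forall>u\<in>set ls. u \<noteq> []"
  shows "Lsel ls v \<in> set ls \<and> Vsel ls (Lsel ls v) = v"
proof -
  have vn: "v \<notin> set pre" using d sp by auto
  have tw: "takeWhile (\<lambda>u. u\<noteq>v) ls = pre" "tl (dropWhile (\<lambda>u. u\<noteq>v) ls) = post"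
    using tw_split[OF vn] sp by auto
  have lsne: "ls \<noteq> []" using sp by simp
  show ?thesis
  proof (cases "is_right_child v")
    case vR: True
    show ?thesis
    proof (cases "post = []")
      case False
      have "last ls = last post" using sp False by simp
      hence "last post \<in> set post" "is_right_child (last post)" using False lr by auto
      hence "filter is_right_child post \<noteq> []" by (metis filter_empty_conv)
      then obtain L rest where f: "filter is_right_child post = L # rest" by (cases "filter is_right_child post") auto
      from filter_eq_ConsD[OF f] obtain us vs where
        u: "post = us @ L # vs" "\<forall>u\<in>set us. \<not> is_right_child u" "is_right_child L" by blast
      have Ls: "Lsel ls v = L" using tw vR False f by (simp add: Lsel_def)
      have ls2: "ls = (pre @ v # us) @ L # vs" using sp u by simp
      have "L \<notin> set (pre @ v # us)" using d ls2 by auto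
      note t2 = tw_split[OF this, of vs, folded ls2]
      have fu: "filter is_right_child us = []" using u(2) by (simp add: filter_empty_conv)
      show ?thesis using Ls t2 u(3) fu vR ls2 by (simp add: Vsel_def)
    next
      case True
      have "hd ls \<in> set ls" using lsne by simp
      hence "filter is_left_child ls \<noteq> []" using hl by (metis filter_empty_conv)
      hence "filter is_left_child (rev ls) \<noteq> []" by (simp add: rev_filter[symmetric])
      then obtain L rest where f: "filter is_left_child (rev ls) = L # rest" by (cases "filter is_left_child (rev ls)") auto
      from filter_eq_ConsD[OF f] obtain us vs where
        u: "rev ls = us @ L # vs" "\<forall>u\<in>set us. \<not> is_left_child u" "is_left_child L" by blast
      have "last (filter is_left_child ls) = L"
        using f by (metis hd_rev list.sel(1) rev_filter)
      hence Ls: "Lsel ls v = L" using tw vR True by (simp add: Lsel_def)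
      have ls2: "ls = rev vs @ L # rev us" using u(1) by (metis rev_append rev_rev_ident rev.simps(2) append.assoc append_Cons append_Nil)
      have "L \<notin> set (rev vs)" using d ls2 by auto
      note t2 = tw_split[OF this, of "rev us", folded ls2]
      have fu: "filter is_left_child (rev us) = []" using u(2) by (simp add: filter_empty_conv)
      have lv: "last ls = v" using sp True by simp
      show ?thesis using Ls t2 LR[OF u(3)] fu lv ls2 by (simp add: Vsel_def)
    qed
  next
    case vL: False
    have vl: "is_left_child v" using vL ne sp by (simp add: is_left_child_def is_right_child_def)
    show ?thesis
    proof (cases "pre = []")
      case False
      have "hd ls = hd pre" using sp False by simp
      hence "hd pre \<in> set (rev pre)" "is_left_child (hd pre)" using False hl by auto
      hence "filter is_left_child (rev pre) \<noteq> []" by (metis filter_empty_conv)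
      then obtain L rest where f: "filter is_left_child (rev pre) = L # rest" by (cases "filter is_left_child (rev pre)") auto
      from filter_eq_ConsD[OF f] obtain us vs where
        u: "rev pre = us @ L # vs" "\<forall>u\<in>set us. \<not> is_left_child u" "is_left_child L" by blast
      have "last (filter is_left_child pre) = L"
        using f by (metis hd_rev list.sel(1) rev_filter)
      hence Ls: "Lsel ls v = L" using tw vL False by (simp add: Lsel_def)
      have pre2: "pre = rev vs @ L # rev us" using u(1) by (metis rev_append rev_rev_ident rev.simps(2) append.assoc append_Cons append_Nil)
      have ls2: "ls = rev vs @ L # (rev us @ v # post)" using sp pre2 by simp
      have "L \<notin> set (rev vs)" using d ls2 by auto
      note t2 = tw_split[OF this, of "rev us @ v # post", folded ls2]
      have fu: "filter is_left_child (rev us) = []" using u(2) by (simp add: filter_empty_conv)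
      show ?thesis using Ls t2 LR[OF u(3)] fu vl ls2 by (simp add: Vsel_def)
    next
      case True
      have "last ls \<in> set ls" using lsne by simp
      hence "filter is_right_child ls \<noteq> []" using lr by (metis filter_empty_conv)
      then obtain L rest where f: "filter is_right_child ls = L # rest" by (cases "filter is_right_child ls") auto
      from filter_eq_ConsD[OF f] obtain us vs where
        u: "ls = us @ L # vs" "\<forall>u\<in>set us. \<not> is_right_child u" "is_right_child L" by blast
      have Ls: "Lsel ls v = L" using tw vL True f by (simp add: Lsel_def)
      have "L \<notin> set us" using d u(1) by auto
      note t2 = tw_split[OF this, of vs, folded u(1)]
      have fu: "filter is_right_child us = []" using u(2) by (simp add: filter_empty_conv)
      have hv: "hd ls = v" using sp True by simp
      show ?thesis using Ls t2 u(3) fu hv u(1) by (simp add: Vsel_def)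
    qed
  qed
qed

definition sig :: "ptree \<times> bool list \<Rightarrow> ptree \<times> bool list" where
  "sig Tw = (case Tw of (T', w) \<Rightarrow> (let T0 = replace_at T' w Leaf; v = Vsel (leaves T0) w
       in (replace_at T0 v (Node Leaf Leaf), v)))"

lemma pi_eq: "pi_map (T, v) = (let T0 = replace_at T v Leaf; L = Lsel (leaves T0) v
   in (replace_at T0 L (Node Leaf Leaf), L))"
  by (simp add: pi_map_def Lsel_def Let_def)

lemma main:
  assumes n: "n \<ge> 1" and m: "(T, v) \<in> marked n"
  shows "pi_map (T, v) \<in> marked n \<and> sig (pi_map (T, v)) = (T, v)"
proof -
  have len: "length (leaves T) = n + 2" and st: "subtree_at T v = Some (Node Leaf Leaf)"
    using m by (auto simp: marked_def trees_def last_branching_def)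
  define T0 where "T0 = replace_at T v Leaf"
  from leaves_split[OF st] obtain pre post where
    sp: "leaves T = pre @ [v @ [False], v @ [True]] @ post"
        "leaves T0 = pre @ [v] @ post"
    unfolding T0_def by fastforce
  have len0: "length (leaves T0) = n + 1" using sp len by simp
  have "T0 \<noteq> Leaf" using len0 n by auto
  note P = leaves_props[OF this]
  define L where "L = Lsel (leaves T0) v"
  have core: "L \<in> set (leaves T0)" "Vsel (leaves T0) L = v"
    using list_core[OF leaves_distinct, of T0 pre v post] sp P unfolding L_def by auto
  have stL: "subtree_at T0 L = Some Leaf" using leaves_leaf core(1) by blast
  define T' where "T' = replace_at T0 L (Node Leaf Leaf)"
  from leaves_split[OF stL] obtain pre2 post2 where
    sp2: "leaves T0 = pre2 @ [L] @ post2"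
        "leaves T' = pre2 @ [L @ [False], L @ [True]] @ post2"
    unfolding T'_def by fastforce
  have "length (leaves T') = n + 2" using sp2 len0 by simp
  moreover have "subtree_at T' L = Some (Node Leaf Leaf)"
    unfolding T'_def using subtree_replace stL by simp
  ultimately have mem: "(T', L) \<in> marked n"
    by (simp add: marked_def trees_def last_branching_def)
  have pe: "pi_map (T, v) = (T', L)" by (simp add: pi_eq T'_def L_def T0_def Let_def)
  have r1: "replace_at T' L Leaf = T0"
    unfolding T'_def using replace_replace[of T0 L] replace_same[OF stL] stL by simp
  have r2: "replace_at T0 v (Node Leaf Leaf) = T"
    unfolding T0_def using replace_replace[of T v] replace_same[OF st] st by simp
  have "sig (T', L) = (T, v)" by (simp add: sig_def r1 core(2) r2 Let_def)
  with mem pe show ?thesis by simp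
qed

lemma size_leaves: "length (leaves T) = size T + 1"
  by (induct T) auto

lemma finite_size: "finite {T :: ptree. size T \<le> k}"
proof (induct k)
  case 0
  have "{T :: ptree. size T \<le> 0} \<subseteq> {Leaf}"
  proof
    fix T :: ptree assume "T \<in> {T. size T \<le> 0}" then show "T \<in> {Leaf}" by (cases T) auto
  qed
  then show ?case using finite_subset by blast
next
  case (Suc k)
  have "{T :: ptree. size T \<le> Suc k} \<subseteq> {Leaf} \<union> (\<lambda>(l, r). Node l r) ` ({T. size T \<le> k} \<times> {T. size T \<le> k})"
  proof
    fix T :: ptree assume "T \<in> {T. size T \<le> Suc k}"
    then show "T \<in> {Leaf} \<union> (\<lambda>(l, r). Node l r) ` ({T. size T \<le> k} \<times> {T. size T \<le> k})"
      by (cases T) auto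
  qed
  then show ?case using Suc finite_subset by blast
qed

lemma finite_marked: "finite (marked n)"
proof -
  have ft: "finite (trees n)"
    using finite_size[of "n+1"] by (rule finite_subset[rotated]) (auto simp: trees_def size_leaves)
  have "marked n \<subseteq> (\<Union>T\<in>trees n. {T} \<times> (butlast ` set (leaves T)))"
  proof
    fix x assume "x \<in> marked n"
    then obtain T v where x: "x = (T, v)" "T \<in> trees n" "subtree_at T v = Some (Node Leaf Leaf)"
      by (auto simp: marked_def last_branching_def)
    from leaves_split[OF x(3)] obtain pre post where
      "leaves T = pre @ [v @ [False], v @ [True]] @ post" by fastforce
    hence "v @ [False] \<in> set (leaves T)" by simp
    hence "v \<in> butlast ` set (leaves T)" by (metis butlast_snoc image_eqI)
    then show "x \<in> (\<Union>T\<in>trees n. {T} \<times> (butlast ` set (leaves T)))" using x by auto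
  qed
  moreover have "finite (\<Union>T\<in>trees n. {T} \<times> (butlast ` set (leaves T)))" using ft by auto
  ultimately show ?thesis by (rule finite_subset)
qed

theorem lemma2:
  fixes n :: nat
  assumes "n \<ge> 1"
  shows "bij_betw pi_map (marked n) (marked n)"
proof -
  have sub: "pi_map ` marked n \<subseteq> marked n" using main[OF assms] by auto
  have inj: "inj_on pi_map (marked n)"
  proof (rule inj_on_inverseI[where g = sig])
    fix x assume "x \<in> marked n"
    then show "sig (pi_map x) = x" using main[OF assms] by (cases x) auto
  qed
  have "pi_map ` marked n = marked n" using endo_inj_surj[OF finite_marked sub inj] .
  with inj show ?thesis by (simp add: bij_betw_def)
qed

end
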